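(* For every real $x\geq 13$, $(x-1)\sqrt{1-\dfrac{2\ln x+4}{x}}-x+\ln x+4\geq 0$.
   Context: $\ln$ denotes the natural logarithm. *)

theory Defs
  imports Complex_Main
begin

end

theory Submission
  imports Defs
begin

lemma ln13: "ln (13::real) \<le> 27/10"
proof -
  have "1 + 27/50 + (27/50)^2/2 \<le> exp (27/50::real)"
    by (rule exp_lower_Taylor_quadratic) simp
  hence "(1 + 27/50 + (27/50)^2/2)^5 \<le> exp (27/50::real) ^ 5"
    by (intro power_mono) auto
  also have "\<dots> = exp (5 * (27/50))" by (simp add: exp_of_nat_mult[symmetric])
  finally have "(1 + 27/50 + (27/50)^2/2)^5 \<le> exp (27/10::real)" by simp
  moreover have "(13::real) \<le> (1 + 27/50 + (27/50)^2/2)^5" by (simp add: eval_nat_numeral)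
  ultimately have "13 \<le> exp (27/10::real)" by linarith
  thus ?thesis by (metis exp_gt_zero exp_ln ln_le_cancel_iff ln_exp zero_less_numeral)
qed

theorem lemma3p3:
  fixes x :: real
  assumes "x \<ge> 13"
  shows "(x - 1) * sqrt (1 - (2 * ln x + 4) / x) - x + ln x + 4 \<ge> 0"
proof -
  define L where "L = ln x"
  define s where "s = sqrt (x/13)"
  have s1: "s \<ge> 1" using assms by (simp add: s_def)
  have xs: "x = 13 * s^2" using assms by (simp add: s_def)
  have "ln x = ln 13 + 2 * ln s" using xs s1 by (simp add: ln_mult ln_realpow)
  moreover have "ln s \<le> s - 1" using s1 by (intro ln_le_minus_one) simp
  ultimately have Lub: "L \<le> 7/10 + 2*s" using ln13 L_def by linarith
  have L0: "L \<ge> 0" using assms L_def by simp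
  have A: "L^2 + 4*L + 7 \<le> 4*s^2 + 108/10*s + 1029/100"
  proof -
    have "L^2 \<le> (7/10 + 2*s)^2" using Lub L0 by (intro power_mono) auto
    thus ?thesis using Lub by (simp add: power2_eq_square algebra_simps)
  qed
  have s2: "s^2 \<le> s^4" "s^3 \<le> s^4" "1 \<le> s^4" using s1
    by (auto intro: power_increasing one_le_power simp: power_increasing)
  have s3: "s \<le> s^4" using power_increasing[of 1 4 s] s1 by simp
  have B: "(L^2 + 4*L + 7) * x \<le> (4*s^2 + 108/10*s + 1029/100) * (13*s^2)"
  proof -
    have "(L^2 + 4*L + 7) * x \<le> (4*s^2 + 108/10*s + 1029/100) * x"
      using A assms by (intro mult_right_mono) auto
    thus ?thesis using xs by simp
  qed
  have D: "2*x^2 - (L^2+4*L+7)*x - 2*L - 4 \<ge> 0"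
  proof -
    have "2*x^2 = 338 * s^4" using xs by (simp add: power2_eq_square power4_eq_xxxx)
    moreover have "(4*s^2 + 108/10*s + 1029/100) * (13*s^2) = 52*s^4 + 1404/10*s^3 + 13377/100*s^2"
      by (simp add: algebra_simps power2_eq_square power3_eq_cube power4_eq_xxxx)
    ultimately show ?thesis using B Lub s2 s3 by linarith
  qed
  have "s \<le> s^2" using power_increasing[of 1 2 s] s1 by simp
  hence R0: "x - L - 4 > 0" using Lub xs s1 by linarith
  have xpos: "x > 0" using assms by simp
  have eq: "1 - (2 * L + 4) / x = (x - 2*L - 4) / x" using xpos by (simp add: field_simps)
  have key: "(x - L - 4)^2 \<le> (x-1)^2 * ((x - 2*L - 4) / x)"
  proof -
    have "(x - L - 4)^2 * x \<le> (x-1)^2 * (x - 2*L - 4)"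
      using D by (simp add: algebra_simps power2_eq_square)
    thus ?thesis using xpos by (simp add: field_simps)
  qed
  have "x - L - 4 = sqrt ((x - L - 4)^2)" using R0 by simp
  also have "\<dots> \<le> sqrt ((x-1)^2 * ((x - 2*L - 4) / x))" using key by (rule real_sqrt_le_mono)
  also have "\<dots> = (x-1) * sqrt ((x - 2*L - 4) / x)" using assms by (simp only: real_sqrt_mult real_sqrt_abs)
  finally show ?thesis using eq L_def by simp
qed

end
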